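(* For any instance of MPMD or MBPMD, Greedy Dual eventually matches every request, i.e., it returns a feasible perfect matching of all $2m$ requests.
   Context: Problem (MPMD / MBPMD). Let $(\mathcal{X},\mathrm{dist})$ be a metric space. An instance consists of $2m$ requests $u_1,\dots,u_{2m}$. Each request $u$ is a triple $(\mathrm{pos}(u),\mathrm{atime}(u),\mathrm{sgn}(u))$, where $\mathrm{pos}(u)\in\mathcal{X}$ is its location and $\mathrm{atime}(u)\ge0$ is its arrival time, with arrival times nondecreasing. In MPMD, $\mathrm{sgn}(u)=0$ for all requests. In MBPMD, exactly $m$ requests have sign $+1$ and $m$ have sign $-1$. At time $\tau$, an algorithm may match two arrived, unmatched requests $u,v$ with $\mathrm{sgn}(u)=-\mathrm{sgn}(v)$, at cost $\mathrm{dist}(\mathrm{pos}(u),\mathrm{pos}(v))$ (connection cost) plus $(\tau-\mathrm{atime}(u))+(\tau-\mathrm{atime}(v))$ (waiting costs). All requests must eventually be matched. Notation. Edges are unordered pairs $\{u,v\}$ of distinct requests with $\mathrm{sgn}(u)=-\mathrm{sgn}(v)$. For a set $S$ of requests, $\delta(S)$ is the set of edges with exactly one endpoint in $S$. In MPMD, $\mathrm{sur}(S)=|S|\bmod 2$; in MBPMD, $\mathrm{sur}(S)=|\sum_{u\in S}\mathrm{sgn}(u)|$. For an edge $e=(u,v)$, $\mathrm{cost}(e)=\mathrm{dist}(\mathrm{pos}(u),\mathrm{pos}(v))+|\mathrm{atime}(u)-\mathrm{atime}(v)|$. Algorithm Greedy Dual (GD). GD maintains a dual variable $y_S\ge0$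 for every set $S$ of already-arrived requests; $y_S(\tau)$ denotes its value at time $\tau$. It also maintains a partition of the arrived requests into active sets, with $\mathcal{A}(u)$ denoting the active set containing $u$. An active set is growing if it contains at least one free request, and non-growing otherwise. - When a request $u$ arrives, $\mathcal{A}(u)\leftarrow\{u\}$ becomes a new active set, and $y_S\leftarrow 0$ for every new set $S$ containing $u$. - Tight-constraint event: while there is an edge $e=(u,v)$ between arrived requests with $\mathcal{A}(u)\neq\mathcal{A}(v)$ and $\sum_{S:\,e\in\delta(S)}y_S=\mathrm{cost}(e)$, GD does the following. It merges the two sets: $S=\mathcal{A}(u)\cup\mathcal{A}(v)$ becomes active and $\mathcal{A}(w)\leftarrow S$ for all $w\in S$, while $\mathcal{A}(u)$ and $\mathcal{A}(v)$ become inactive. It marks the edge $e$. Then, while there are free $u',v'\in S$ with $\mathrm{sgn}(u')=-\mathrm{sgn}(v')$, it matches $u'$ with $v'$ at the current time. - At all other times, $y_S$ increases continuously at rate $1$ (the same rate as time) for every active growing set $S$; all other dual variables stay constant. *)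

theory Defs
  imports Complex_Main
begin

text \<open>Requests are indexed by 0, ..., 2m-1 in order of arrival.  A request u has
  position pos u, arrival time atime u and sign sg u.\<close>

definition valid_instance :: "nat \<Rightarrow> (nat \<Rightarrow> real) \<Rightarrow> (nat \<Rightarrow> int) \<Rightarrow> bool" where
  "valid_instance m atime sg \<longleftrightarrow>
     (\<forall>i<2*m. 0 \<le> atime i) \<and>
     (\<forall>i j. i \<le> j \<longrightarrow> j < 2*m \<longrightarrow> atime i \<le> atime j) \<and>
     ((\<forall>i<2*m. sg i = 0) \<comment> \<open>MPMD\<close>
      \<or> ((\<forall>i<2*m. sg i = 1 \<or> sg i = -1) \<and> card {i. i < 2*m \<and> sg i = 1} = m))" \<comment> \<open>MBPMD\<close>

definition cost :: "(nat \<Rightarrow> 'a::metric_space) \<Rightarrow> (nat \<Rightarrow> real) \<Rightarrow> nat \<Rightarrow> nat \<Rightarrow> real" where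
  "cost pos atime u v = dist (pos u) (pos v) + \<bar>atime u - atime v\<bar>"

record gd_state =
  time :: real
  arrived :: nat
  active :: "nat set set"
  yv :: "nat set \<Rightarrow> real"
  matching :: "(nat \<times> nat) set"
  marked :: "nat set set"

definition free :: "gd_state \<Rightarrow> nat \<Rightarrow> bool" where
  "free s u \<longleftrightarrow> u < arrived s \<and> (\<forall>(a,b)\<in>matching s. u \<noteq> a \<and> u \<noteq> b)"

definition growing :: "gd_state \<Rightarrow> nat set \<Rightarrow> bool" where
  "growing s S \<longleftrightarrow> (\<exists>u\<in>S. free s u)"

definition dualsum :: "nat \<Rightarrow> (nat set \<Rightarrow> real) \<Rightarrow> nat \<Rightarrow> nat \<Rightarrow> real" where
  "dualsum n y u v = (\<Sum>S\<in>{S. S \<subseteq> {..<n} \<and> (u \<in> S) \<noteq> (v \<in> S)}. y S)"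

definition cross_edge :: "(nat \<Rightarrow> int) \<Rightarrow> gd_state \<Rightarrow> nat \<Rightarrow> nat \<Rightarrow> bool" where
  "cross_edge sg s u v \<longleftrightarrow> u < arrived s \<and> v < arrived s \<and> u \<noteq> v \<and> sg u = - sg v \<and>
      \<not> (\<exists>S\<in>active s. u \<in> S \<and> v \<in> S)"

definition tight_pending :: "nat \<Rightarrow> (nat \<Rightarrow> 'a::metric_space) \<Rightarrow> (nat \<Rightarrow> real) \<Rightarrow> (nat \<Rightarrow> int) \<Rightarrow> gd_state \<Rightarrow> bool" where
  "tight_pending n pos atime sg s \<longleftrightarrow>
     (\<exists>u v. cross_edge sg s u v \<and> dualsum n (yv s) u v = cost pos atime u v)"

definition match_pending :: "(nat \<Rightarrow> int) \<Rightarrow> gd_state \<Rightarrow> bool" where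
  "match_pending sg s \<longleftrightarrow> (\<exists>S\<in>active s. \<exists>u\<in>S. \<exists>v\<in>S.
      u \<noteq> v \<and> free s u \<and> free s v \<and> sg u = - sg v)"

definition grow_y :: "gd_state \<Rightarrow> real \<Rightarrow> nat set \<Rightarrow> real" where
  "grow_y s d = (\<lambda>S. if S \<in> active s \<and> growing s S then yv s S + d else yv s S)"

text \<open>Matching free
  opposite-sign requests inside an active set has priority (it happens immediately
  after the merge that created the set); between events, every active growing set's
  dual grows at rate 1 until the next event (an arrival or a newly tight edge).\<close>
inductive gd_step :: "nat \<Rightarrow> (nat \<Rightarrow> 'a::metric_space) \<Rightarrow> (nat \<Rightarrow> real) \<Rightarrow> (nat \<Rightarrow> int)
     \<Rightarrow> gd_state \<Rightarrow> gd_state \<Rightarrow> bool" for n pos atime sg where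
  gd_match:
    "\<lbrakk> S \<in> active s; u \<in> S; v \<in> S; u \<noteq> v; free s u; free s v; sg u = - sg v \<rbrakk>
     \<Longrightarrow> gd_step n pos atime sg s (s\<lparr>matching := insert (u, v) (matching s)\<rparr>)"
| gd_arrive:
    "\<lbrakk> \<not> match_pending sg s; arrived s < n; atime (arrived s) = time s \<rbrakk>
     \<Longrightarrow> gd_step n pos atime sg s
           (s\<lparr>arrived := Suc (arrived s), active := insert {arrived s} (active s)\<rparr>)"
| gd_merge:
    "\<lbrakk> \<not> match_pending sg s; cross_edge sg s u v;
       dualsum n (yv s) u v = cost pos atime u v;
       S1 \<in> active s; S2 \<in> active s; u \<in> S1; v \<in> S2 \<rbrakk>
     \<Longrightarrow> gd_step n pos atime sg s
           (s\<lparr>active := insert (S1 \<union> S2) (active s - {S1, S2}),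
              marked := insert {u, v} (marked s)\<rparr>)"
| gd_grow:
    "\<lbrakk> \<not> match_pending sg s; \<not> tight_pending n pos atime sg s;
       arrived s < n \<longrightarrow> time s < atime (arrived s);
       0 < d;
       arrived s < n \<longrightarrow> time s + d \<le> atime (arrived s);
       \<forall>u v. cross_edge sg s u v \<longrightarrow> dualsum n (grow_y s d) u v \<le> cost pos atime u v;
       (arrived s < n \<and> time s + d = atime (arrived s)) \<or>
       (\<exists>u v. cross_edge sg s u v \<and> dualsum n (grow_y s d) u v = cost pos atime u v) \<rbrakk>
     \<Longrightarrow> gd_step n pos atime sg s (s\<lparr>time := time s + d, yv := grow_y s d\<rparr>)"

definition gd_init :: gd_state where
  "gd_init = \<lparr>time = 0, arrived = 0, active = {}, yv = (\<lambda>_. 0), matching = {}, marked = {}\<rparr>"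

text \<open>Every run (every maximal sequence of steps) reaches a state satisfying P
  after finitely many steps.\<close>
inductive inevitably :: "('s \<Rightarrow> 's \<Rightarrow> bool) \<Rightarrow> ('s \<Rightarrow> bool) \<Rightarrow> 's \<Rightarrow> bool" for step P where
  now: "P s \<Longrightarrow> inevitably step P s"
| later: "\<lbrakk> \<exists>s'. step s s'; \<forall>s'. step s s' \<longrightarrow> inevitably step P s' \<rbrakk> \<Longrightarrow> inevitably step P s"

definition perfect_matching :: "nat \<Rightarrow> (nat \<Rightarrow> int) \<Rightarrow> (nat \<times> nat) set \<Rightarrow> bool" where
  "perfect_matching n sg M \<longleftrightarrow>
     (\<forall>(a, b)\<in>M. a < n \<and> b < n \<and> a \<noteq> b \<and> sg a = - sg b) \<and>
     (\<forall>u<n. \<exists>!p. p \<in> M \<and> (fst p = u \<or> snd p = u))"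

end

theory Submission
  imports Defs
begin


definition Mv :: "gd_state \<Rightarrow> nat set" where
  "Mv s = fst ` matching s \<union> snd ` matching s"

lemma free_Mv: "free s u \<longleftrightarrow> u < arrived s \<and> u \<notin> Mv s"
  unfolding free_def Mv_def by force

lemma dualsum_sym: "dualsum n y u v = dualsum n y v u"
proof -
  have "{S. S \<subseteq> {..<n} \<and> (u \<in> S) \<noteq> (v \<in> S)} = {S. S \<subseteq> {..<n} \<and> (v \<in> S) \<noteq> (u \<in> S)}" by auto
  thus ?thesis unfolding dualsum_def by simp
qed

lemma cost_sym: "cost pos atime u v = cost pos atime v u"
  by (simp add: cost_def dist_commute abs_minus_commute)

lemma fin_sub: "finite {S. S \<subseteq> {..<(n::nat)} \<and> P S}"
  by (rule finite_subset[of _ "Pow {..<n}"]) auto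

lemma sum_grow:
  assumes "finite A"
  shows "(\<Sum>S\<in>A. grow_y s d S) = (\<Sum>S\<in>A. yv s S) + d * real (card {S\<in>A. S \<in> active s \<and> growing s S})"
proof -
  have "(\<Sum>S\<in>A. grow_y s d S) = (\<Sum>S\<in>A. yv s S + (if S \<in> active s \<and> growing s S then d else 0))"
    unfolding grow_y_def by (rule sum.cong) auto
  also have "\<dots> = (\<Sum>S\<in>A. yv s S) + (\<Sum>S\<in>A. (if S \<in> active s \<and> growing s S then d else 0))"
    by (simp add: sum.distrib)
  also have "(\<Sum>S\<in>A. (if S \<in> active s \<and> growing s S then d else 0)) = d * real (card {S\<in>A. S \<in> active s \<and> growing s S})"
    using assms by (simp add: sum.If_cases Int_def)
  finally show ?thesis .
qed

definition rate :: "nat \<Rightarrow> gd_state \<Rightarrow> nat \<Rightarrow> nat \<Rightarrow> real" where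
  "rate n s u v = real (card {S\<in>{S. S \<subseteq> {..<n} \<and> (u \<in> S) \<noteq> (v \<in> S)}. S \<in> active s \<and> growing s S})"

lemma dualsum_grow: "dualsum n (grow_y s d) u v = dualsum n (yv s) u v + d * rate n s u v"
  unfolding dualsum_def rate_def by (rule sum_grow[OF fin_sub])

lemma exists_d:
  fixes E :: "'e set" and g r :: "'e \<Rightarrow> real" and a :: real
  assumes "finite E" "\<forall>e\<in>E. 0 < g e" "\<forall>e\<in>E. 0 \<le> r e" "A \<or> (\<exists>e\<in>E. 0 < r e)" "A \<Longrightarrow> 0 < a"
  shows "\<exists>d>0. (A \<longrightarrow> d \<le> a) \<and> (\<forall>e\<in>E. d * r e \<le> g e) \<and> ((A \<and> d = a) \<or> (\<exists>e\<in>E. d * r e = g e))"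
proof -
  define D where "D = (\<lambda>e. g e / r e) ` {e\<in>E. 0 < r e} \<union> (if A then {a} else {})"
  have fin: "finite D" using assms(1) by (simp add: D_def)
  have ne: "D \<noteq> {}" using assms(4) by (auto simp: D_def)
  have pos: "\<forall>x\<in>D. 0 < x" using assms(2,5) by (auto simp: D_def)
  define d where "d = Min D"
  have dD: "d \<in> D" using fin ne by (simp add: d_def)
  hence dpos: "0 < d" using pos by blast
  have le: "\<forall>x\<in>D. d \<le> x" using fin by (simp add: d_def)
  show ?thesis
  proof (intro exI[of _ d] conjI)
    show "0<d" by fact
    show "A \<longrightarrow> d \<le> a" using le by (auto simp: D_def)
    show "\<forall>e\<in>E. d * r e \<le> g e"
    proof
      fix e assume e: "e\<in>E"
      show "d * r e \<le> g e"
      proof (cases "0 < r e")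
        case True
        then have "d \<le> g e / r e" using le e by (auto simp: D_def)
        then show ?thesis using True by (simp add: pos_le_divide_eq)
      next
        case False
        then have "r e = 0" using assms(3) e by force
        then show ?thesis using assms(2) e by force
      qed
    qed
    show "(A \<and> d = a) \<or> (\<exists>e\<in>E. d * r e = g e)"
    proof (cases "d \<in> (\<lambda>e. g e / r e) ` {e\<in>E. 0 < r e}")
      case True
      then obtain e where "e \<in> E" "0 < r e" "d = g e / r e" by blast
      then have "d * r e = g e" by simp
      then show ?thesis using \<open>e \<in> E\<close> by blast
    next
      case False
      then show ?thesis using dD unfolding D_def by (auto split: if_splits)
    qed
  qed
qed



locale gdl =
  fixes m :: nat and pos :: "nat \<Rightarrow> 'a::metric_space" and atime :: "nat \<Rightarrow> real" and sg :: "nat \<Rightarrow> int"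
  assumes valid: "valid_instance m atime sg"
begin

abbreviation "N \<equiv> 2*m"

definition invar :: "gd_state \<Rightarrow> bool" where
 "invar s \<longleftrightarrow> arrived s \<le> N \<and>
   (arrived s < N \<longrightarrow> time s \<le> atime (arrived s)) \<and>
   (\<forall>S\<in>active s. S \<noteq> {} \<and> S \<subseteq> {..<arrived s}) \<and>
   (\<forall>S\<in>active s. \<forall>T\<in>active s. S \<noteq> T \<longrightarrow> S \<inter> T = {}) \<and>
   (\<forall>x<arrived s. \<exists>S\<in>active s. x \<in> S) \<and>
   (\<forall>S. 0 \<le> yv s S) \<and>
   (\<forall>S. yv s S \<noteq> 0 \<longrightarrow> S \<subseteq> {..<arrived s}) \<and>
   (\<forall>v<arrived s. (\<Sum>S\<in>{S. S \<subseteq> {..<N} \<and> v \<in> S}. yv s S) \<le> time s - atime v) \<and>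
   (\<forall>u v. cross_edge sg s u v \<longrightarrow> dualsum N (yv s) u v \<le> cost pos atime u v) \<and>
   finite (matching s) \<and>
   (\<forall>(a,b)\<in>matching s. a < arrived s \<and> b < arrived s \<and> a \<noteq> b \<and> sg a = - sg b) \<and>
   (\<forall>p\<in>matching s. \<forall>q\<in>matching s. p \<noteq> q \<longrightarrow> {fst p, snd p} \<inter> {fst q, snd q} = {}) \<and>
   card (Mv s) = 2 * card (matching s) \<and>
   (\<Sum>x\<in>Mv s. sg x) = 0"

lemma invarD:
  assumes "invar s"
  shows i_arr: "arrived s \<le> N"
    and i_time: "arrived s < N \<longrightarrow> time s \<le> atime (arrived s)"
    and i_act: "\<forall>S\<in>active s. S \<noteq> {} \<and> S \<subseteq> {..<arrived s}"
    and i_disj: "\<forall>S\<in>active s. \<forall>T\<in>active s. S \<noteq> T \<longrightarrow> S \<inter> T = {}"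
    and i_cov: "\<forall>x<arrived s. \<exists>S\<in>active s. x \<in> S"
    and i_ynn: "\<forall>S. 0 \<le> yv s S"
    and i_ysub: "\<forall>S. yv s S \<noteq> 0 \<longrightarrow> S \<subseteq> {..<arrived s}"
    and i_ysum: "\<forall>v<arrived s. (\<Sum>S\<in>{S. S \<subseteq> {..<N} \<and> v \<in> S}. yv s S) \<le> time s - atime v"
    and i_cross: "\<forall>u v. cross_edge sg s u v \<longrightarrow> dualsum N (yv s) u v \<le> cost pos atime u v"
    and i_finM: "finite (matching s)"
    and i_pairs: "\<forall>(a,b)\<in>matching s. a < arrived s \<and> b < arrived s \<and> a \<noteq> b \<and> sg a = - sg b"
    and i_pdisj: "\<forall>p\<in>matching s. \<forall>q\<in>matching s. p \<noteq> q \<longrightarrow> {fst p, snd p} \<inter> {fst q, snd q} = {}"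
    and i_card: "card (Mv s) = 2 * card (matching s)"
    and i_sum: "(\<Sum>x\<in>Mv s. sg x) = 0"
proof -
  have C: "(arrived s \<le> N) \<and>
    (arrived s < N \<longrightarrow> time s \<le> atime (arrived s)) \<and>
    (\<forall>S\<in>active s. S \<noteq> {} \<and> S \<subseteq> {..<arrived s}) \<and>
    (\<forall>S\<in>active s. \<forall>T\<in>active s. S \<noteq> T \<longrightarrow> S \<inter> T = {}) \<and>
    (\<forall>x<arrived s. \<exists>S\<in>active s. x \<in> S) \<and>
    (\<forall>S. 0 \<le> yv s S) \<and>
    (\<forall>S. yv s S \<noteq> 0 \<longrightarrow> S \<subseteq> {..<arrived s}) \<and>
    (\<forall>v<arrived s. (\<Sum>S\<in>{S. S \<subseteq> {..<N} \<and> v \<in> S}. yv s S) \<le> time s - atime v) \<and>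
    (\<forall>u v. cross_edge sg s u v \<longrightarrow> dualsum N (yv s) u v \<le> cost pos atime u v) \<and>
    (finite (matching s)) \<and>
    (\<forall>(a,b)\<in>matching s. a < arrived s \<and> b < arrived s \<and> a \<noteq> b \<and> sg a = - sg b) \<and>
    (\<forall>p\<in>matching s. \<forall>q\<in>matching s. p \<noteq> q \<longrightarrow> {fst p, snd p} \<inter> {fst q, snd q} = {}) \<and>
    (card (Mv s) = 2 * card (matching s)) \<and>
    ((\<Sum>x\<in>Mv s. sg x) = 0)" using assms unfolding invar_def .
  show "arrived s \<le> N" using C by (elim conjE) assumption
  show "arrived s < N \<longrightarrow> time s \<le> atime (arrived s)" using C by (elim conjE) assumption
  show "\<forall>S\<in>active s. S \<noteq> {} \<and> S \<subseteq> {..<arrived s}" using C by (elim conjE) assumption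
  show "\<forall>S\<in>active s. \<forall>T\<in>active s. S \<noteq> T \<longrightarrow> S \<inter> T = {}" using C by (elim conjE) assumption
  show "\<forall>x<arrived s. \<exists>S\<in>active s. x \<in> S" using C by (elim conjE) assumption
  show "\<forall>S. 0 \<le> yv s S" using C by (elim conjE) assumption
  show "\<forall>S. yv s S \<noteq> 0 \<longrightarrow> S \<subseteq> {..<arrived s}" using C by (elim conjE) assumption
  show "\<forall>v<arrived s. (\<Sum>S\<in>{S. S \<subseteq> {..<N} \<and> v \<in> S}. yv s S) \<le> time s - atime v" using C by (elim conjE) assumption
  show "\<forall>u v. cross_edge sg s u v \<longrightarrow> dualsum N (yv s) u v \<le> cost pos atime u v" using C by (elim conjE) assumption
  show "finite (matching s)" using C by (elim conjE) assumption
  show "\<forall>(a,b)\<in>matching s. a < arrived s \<and> b < arrived s \<and> a \<noteq> b \<and> sg a = - sg b" using C by (elim conjE) assumption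
  show "\<forall>p\<in>matching s. \<forall>q\<in>matching s. p \<noteq> q \<longrightarrow> {fst p, snd p} \<inter> {fst q, snd q} = {}" using C by (elim conjE) assumption
  show "card (Mv s) = 2 * card (matching s)" using C by (elim conjE) assumption
  show "(\<Sum>x\<in>Mv s. sg x) = 0" using C by (elim conjE) assumption
qed

lemma invarI:
  assumes "arrived s \<le> N"
    and "arrived s < N \<longrightarrow> time s \<le> atime (arrived s)"
    and "\<forall>S\<in>active s. S \<noteq> {} \<and> S \<subseteq> {..<arrived s}"
    and "\<forall>S\<in>active s. \<forall>T\<in>active s. S \<noteq> T \<longrightarrow> S \<inter> T = {}"
    and "\<forall>x<arrived s. \<exists>S\<in>active s. x \<in> S"
    and "\<forall>S. 0 \<le> yv s S"
    and "\<forall>S. yv s S \<noteq> 0 \<longrightarrow> S \<subseteq> {..<arrived s}"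
    and "\<forall>v<arrived s. (\<Sum>S\<in>{S. S \<subseteq> {..<N} \<and> v \<in> S}. yv s S) \<le> time s - atime v"
    and "\<forall>u v. cross_edge sg s u v \<longrightarrow> dualsum N (yv s) u v \<le> cost pos atime u v"
    and "finite (matching s)"
    and "\<forall>(a,b)\<in>matching s. a < arrived s \<and> b < arrived s \<and> a \<noteq> b \<and> sg a = - sg b"
    and "\<forall>p\<in>matching s. \<forall>q\<in>matching s. p \<noteq> q \<longrightarrow> {fst p, snd p} \<inter> {fst q, snd q} = {}"
    and "card (Mv s) = 2 * card (matching s)"
    and "(\<Sum>x\<in>Mv s. sg x) = 0"
  shows "invar s"
  unfolding invar_def
  apply (intro conjI)
  apply (rule assms(1))
  apply (rule assms(2))
  apply (rule assms(3))
  apply (rule assms(4))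
  apply (rule assms(5))
  apply (rule assms(6))
  apply (rule assms(7))
  apply (rule assms(8))
  apply (rule assms(9))
  apply (rule assms(10))
  apply (rule assms(11))
  apply (rule assms(12))
  apply (rule assms(13))
  apply (rule assms(14))
  done

lemma invar_init: "invar gd_init"
  using valid by (simp add: invar_def gd_init_def Mv_def cross_edge_def valid_instance_def)

lemma invar_match:
  assumes I: "invar s" and "S \<in> active s" "u \<in> S" "v \<in> S" "u \<noteq> v" "free s u" "free s v" "sg u = - sg v"
  shows "invar (s\<lparr>matching := insert (u, v) (matching s)\<rparr>)"
proof -
  note D = invarD[OF I]
  have fu: "u < arrived s" "u \<notin> Mv s" and fv: "v < arrived s" "v \<notin> Mv s" using assms(6,7) free_Mv by auto
  have MvE: "Mv (s\<lparr>matching := insert (u, v) (matching s)\<rparr>) = insert u (insert v (Mv s))" by (auto simp: Mv_def)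
  have finM: "finite (matching s)" by (rule D)
  have finMv: "finite (Mv s)" using finM by (simp add: Mv_def)
  have nin: "(u,v) \<notin> matching s" using fu(2) unfolding Mv_def by force
  have ce: "cross_edge sg (s\<lparr>matching := insert (u, v) (matching s)\<rparr>) = cross_edge sg s"
    by (simp add: cross_edge_def fun_eq_iff)
  have disj: "\<forall>q\<in>matching s. {u,v} \<inter> {fst q, snd q} = {}"
  proof
    fix q assume "q \<in> matching s"
    then have "fst q \<in> Mv s" "snd q \<in> Mv s" unfolding Mv_def by auto
    then show "{u,v} \<inter> {fst q, snd q} = {}" using fu fv by auto
  qed
  have c1: "card (insert u (insert v (Mv s))) = card (Mv s) + 2" using fu fv finMv assms(5) by simp
  have c2: "card (insert (u,v) (matching s)) = card (matching s) + 1" using finM nin by simp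
  have s1: "(\<Sum>x\<in>insert u (insert v (Mv s)). sg x) = sg u + sg v + (\<Sum>x\<in>Mv s. sg x)"
    using fu fv finMv assms(5) by simp
  have p2: "\<forall>(a,b)\<in>insert (u,v) (matching s). a < arrived s \<and> b < arrived s \<and> a \<noteq> b \<and> sg a = - sg b"
    using D(11) fu fv assms(5,8) by auto
  have d2: "\<forall>p\<in>insert (u,v) (matching s). \<forall>q\<in>insert (u,v) (matching s). p \<noteq> q \<longrightarrow> {fst p, snd p} \<inter> {fst q, snd q} = {}"
  proof (intro ballI impI)
    fix p q assume p: "p \<in> insert (u,v) (matching s)" and q: "q \<in> insert (u,v) (matching s)" and pq: "p \<noteq> q"
    show "{fst p, snd p} \<inter> {fst q, snd q} = {}"
    proof (cases "p = (u,v)")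
      case True
      then have "q \<in> matching s" using q pq by auto
      then show ?thesis using disj True by auto
    next
      case False
      then have pM: "p \<in> matching s" using p by auto
      show ?thesis
      proof (cases "q = (u,v)")
        case True then show ?thesis using disj pM by auto
      next
        case False then show ?thesis using D(12) pM q pq by auto
      qed
    qed
  qed
  show ?thesis
    apply (rule invarI)
    apply (simp_all only: MvE ce gd_state.simps c1 c2 s1)
    using D p2 d2 c1 c2 assms(8) finM by simp_all
qed

end

context gdl begin

lemma mono_at: "i \<le> j \<Longrightarrow> j < N \<Longrightarrow> atime i \<le> atime j"
  using valid unfolding valid_instance_def by blast

lemma invar_arrive:
  assumes I: "invar s" and w: "arrived s < N" and at: "atime (arrived s) = time s"
  shows "invar (s\<lparr>arrived := Suc (arrived s), active := insert {arrived s} (active s)\<rparr>)"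
    (is "invar ?s'")
proof -
  let ?w = "arrived s"
  note a1 = invarD(3)[OF I] and a2 = invarD(4)[OF I] and a3 = invarD(5)[OF I]
   and y0 = invarD(6)[OF I] and y1 = invarD(7)[OF I] and sb = invarD(8)[OF I]
   and cb = invarD(9)[OF I] and finM = invarD(10)[OF I] and pairs = invarD(11)[OF I]
   and dis = invarD(12)[OF I] and cM = invarD(13)[OF I] and sM = invarD(14)[OF I]
  have MvE: "Mv ?s' = Mv s" by (simp add: Mv_def)
  have n1: "Suc ?w \<le> N" using w by simp
  have n2: "Suc ?w < N \<longrightarrow> time s \<le> atime (Suc ?w)" using at mono_at[of ?w "Suc ?w"] by auto
  have n3: "\<forall>S\<in>insert {?w} (active s). S \<noteq> {} \<and> S \<subseteq> {..<Suc ?w}" using a1 less_Suc_eq by blast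
  have n4: "\<forall>S\<in>insert {?w} (active s). \<forall>T\<in>insert {?w} (active s). S \<noteq> T \<longrightarrow> S \<inter> T = {}"
    using a1 a2 by blast
  have n5: "\<forall>x<Suc ?w. \<exists>S\<in>insert {?w} (active s). x \<in> S" using a3 less_Suc_eq by auto
  have n6: "\<forall>S. yv s S \<noteq> 0 \<longrightarrow> S \<subseteq> {..<Suc ?w}" using y1 less_Suc_eq by blast
  have yw: "yv s S = 0" if "?w \<in> S" for S using y1 that by blast
  have n7: "\<forall>v<Suc ?w. (\<Sum>S\<in>{S. S \<subseteq> {..<N} \<and> v \<in> S}. yv s S) \<le> time s - atime v"
  proof (intro allI impI)
    fix v assume "v < Suc ?w"
    then consider "v < ?w" | "v = ?w" by linarith
    then show "(\<Sum>S\<in>{S. S \<subseteq> {..<N} \<and> v \<in> S}. yv s S) \<le> time s - atime v"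
    proof cases
      case 1 then show ?thesis using sb by blast
    next
      case 2 then show ?thesis using yw at by simp
    qed
  qed
  have key: "dualsum N (yv s) ?w v \<le> cost pos atime ?w v" if v: "v < ?w" for v
  proof -
    let ?D = "{S. S \<subseteq> {..<N} \<and> (?w \<in> S) \<noteq> (v \<in> S)}"
    let ?V = "{S. S \<subseteq> {..<N} \<and> v \<in> S}"
    have "dualsum N (yv s) ?w v = (\<Sum>S\<in>?D \<inter> ?V. yv s S)"
      unfolding dualsum_def
      by (rule sum.mono_neutral_right[OF fin_sub]) (auto intro: yw)
    also have "\<dots> \<le> (\<Sum>S\<in>?V. yv s S)"
      by (rule sum_mono2[OF fin_sub]) (auto simp: y0)
    also have "\<dots> \<le> time s - atime v" using sb v by blast
    also have "\<dots> \<le> cost pos atime ?w v" unfolding cost_def using at zero_le_dist[of "pos ?w" "pos v"] abs_ge_self[of "time s - atime v"] by linarith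
    finally show ?thesis .
  qed
  have n8: "\<forall>u v. cross_edge sg ?s' u v \<longrightarrow> dualsum N (yv s) u v \<le> cost pos atime u v"
  proof (intro allI impI)
    fix u v assume ce: "cross_edge sg ?s' u v"
    then have uv: "u < Suc ?w" "v < Suc ?w" "u \<noteq> v" by (auto simp: cross_edge_def)
    then consider "u < ?w" "v < ?w" | "u = ?w" "v < ?w" | "v = ?w" "u < ?w" by linarith
    then show "dualsum N (yv s) u v \<le> cost pos atime u v"
    proof cases
      case 1
      then have "cross_edge sg s u v" using ce by (auto simp: cross_edge_def)
      then show ?thesis using cb by blast
    next
      case 2 then show ?thesis using key by blast
    next
      case 3 then show ?thesis using key[of u] dualsum_sym cost_sym by metis
    qed
  qed
  have p2: "\<forall>(a,b)\<in>matching s. a < Suc ?w \<and> b < Suc ?w \<and> a \<noteq> b \<and> sg a = - sg b"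
    using pairs by auto
  show ?thesis
    apply (rule invarI)
    apply (simp_all only: MvE gd_state.simps)
    using n1 n2 n3 n4 n5 n6 n7 n8 p2 y0 finM dis cM sM by simp_all
qed


lemma invar_merge:
  assumes I: "invar s" and ce: "cross_edge sg s u v" and S: "S1 \<in> active s" "S2 \<in> active s" "u \<in> S1" "v \<in> S2"
  shows "invar (s\<lparr>active := insert (S1 \<union> S2) (active s - {S1, S2}), marked := insert {u, v} (marked s)\<rparr>)"
    (is "invar ?s'")
proof -
  note a1 = invarD(3)[OF I] and a2 = invarD(4)[OF I] and a3 = invarD(5)[OF I]
   and cb = invarD(9)[OF I]
  let ?A = "insert (S1 \<union> S2) (active s - {S1, S2})"
  have MvE: "Mv ?s' = Mv s" by (simp add: Mv_def)
  have ne: "S1 \<noteq> S2" using ce S unfolding cross_edge_def by blast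
  have n3: "\<forall>S\<in>?A. S \<noteq> {} \<and> S \<subseteq> {..<arrived s}"
  proof
    fix X assume X: "X \<in> ?A"
    show "X \<noteq> {} \<and> X \<subseteq> {..<arrived s}"
    proof (cases "X = S1 \<union> S2")
      case True
      have "S1 \<subseteq> {..<arrived s}" "S2 \<subseteq> {..<arrived s}" "S1 \<noteq> {}" using a1 S(1,2) by auto
      then show ?thesis using True by auto
    next
      case False then have "X \<in> active s" using X by auto
      then show ?thesis using a1 by auto
    qed
  qed
  have n4: "\<forall>S\<in>?A. \<forall>T\<in>?A. S \<noteq> T \<longrightarrow> S \<inter> T = {}"
  proof (intro ballI impI)
    fix X Y assume X: "X \<in> ?A" and Y: "Y \<in> ?A" and XY: "X \<noteq> Y"
    have dd: "(S1 \<union> S2) \<inter> T = {}" if "T \<in> active s - {S1, S2}" for T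
    proof -
      have "T \<in> active s" "T \<noteq> S1" "T \<noteq> S2" using that by auto
      then have "S1 \<inter> T = {}" "S2 \<inter> T = {}" using a2 S(1,2) by auto
      then show ?thesis by auto
    qed
    show "X \<inter> Y = {}"
    proof (cases "X = S1 \<union> S2")
      case True
      then have "Y \<in> active s - {S1, S2}" using Y XY by blast
      then show ?thesis using dd True by blast
    next
      case False
      then have Xa: "X \<in> active s - {S1, S2}" using X by blast
      show ?thesis
      proof (cases "Y = S1 \<union> S2")
        case True then show ?thesis using dd[OF Xa] by blast
      next
        case False then have "Y \<in> active s - {S1, S2}" using Y by blast
        then show ?thesis using a2 Xa XY by blast
      qed
    qed
  qed
  have n5: "\<forall>x<arrived s. \<exists>S\<in>?A. x \<in> S"
  proof (intro allI impI)
    fix x assume "x < arrived s"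
    then obtain T where T: "T \<in> active s" "x \<in> T" using a3 by blast
    show "\<exists>S\<in>?A. x \<in> S"
    proof (cases "T = S1 \<or> T = S2")
      case True then show ?thesis using T by (intro bexI[of _ "S1 \<union> S2"]) auto
    next
      case False then show ?thesis using T by (intro bexI[of _ T]) auto
    qed
  qed
  have n9: "\<forall>a b. cross_edge sg ?s' a b \<longrightarrow> dualsum N (yv s) a b \<le> cost pos atime a b"
  proof (intro allI impI)
    fix a b assume c: "cross_edge sg ?s' a b"
    have "cross_edge sg s a b"
    proof -
      have "\<not> (\<exists>S\<in>active s. a \<in> S \<and> b \<in> S)"
      proof
        assume "\<exists>S\<in>active s. a \<in> S \<and> b \<in> S"
        then obtain T where T: "T \<in> active s" "a \<in> T" "b \<in> T" by blast
        have "\<exists>S\<in>?A. a \<in> S \<and> b \<in> S"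
        proof (cases "T = S1 \<or> T = S2")
          case True then show ?thesis using T by (intro bexI[of _ "S1 \<union> S2"]) auto
        next
          case False then show ?thesis using T by (intro bexI[of _ T]) auto
        qed
        then show False using c unfolding cross_edge_def by simp
      qed
      then show ?thesis using c unfolding cross_edge_def by simp
    qed
    then show "dualsum N (yv s) a b \<le> cost pos atime a b" using cb by blast
  qed
  show ?thesis
    apply (rule invarI)
    apply (simp_all only: MvE gd_state.simps)
    using invarD[OF I] n3 n4 n5 n9 by simp_all
qed

lemma invar_grow:
  assumes I: "invar s" and d: "0 < d" and t: "arrived s < N \<longrightarrow> time s + d \<le> atime (arrived s)"
    and c: "\<forall>u v. cross_edge sg s u v \<longrightarrow> dualsum N (grow_y s d) u v \<le> cost pos atime u v"
  shows "invar (s\<lparr>time := time s + d, yv := grow_y s d\<rparr>)"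
    (is "invar ?s'")
proof -
  note a1 = invarD(3)[OF I] and a2 = invarD(4)[OF I]
   and y0 = invarD(6)[OF I] and y1 = invarD(7)[OF I] and sb = invarD(8)[OF I]
  have MvE: "Mv ?s' = Mv s" by (simp add: Mv_def)
  have ce: "cross_edge sg ?s' = cross_edge sg s" by (simp add: cross_edge_def fun_eq_iff)
  have n6: "\<forall>S. 0 \<le> grow_y s d S" using y0 d by (simp add: grow_y_def)
  have n7: "\<forall>S. grow_y s d S \<noteq> 0 \<longrightarrow> S \<subseteq> {..<arrived s}"
    using y1 a1 by (auto simp: grow_y_def split: if_splits)
  have n8: "\<forall>v<arrived s. (\<Sum>S\<in>{S. S \<subseteq> {..<N} \<and> v \<in> S}. grow_y s d S) \<le> time s + d - atime v"
  proof (intro allI impI)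
    fix v assume v: "v < arrived s"
    let ?V = "{S. S \<subseteq> {..<N} \<and> v \<in> S}"
    let ?G = "{S\<in>?V. S \<in> active s \<and> growing s S}"
    have finG: "finite ?G" using fin_sub[of N "\<lambda>S. v \<in> S"] by simp
    have "\<forall>a1\<in>?G. \<forall>a2\<in>?G. a1 = a2" using a2 by blast
    then have "card ?G \<le> Suc 0" using card_le_Suc0_iff_eq[OF finG] by blast
    then have "d * real (card ?G) \<le> d" using d by simp
    moreover have "(\<Sum>S\<in>?V. grow_y s d S) = (\<Sum>S\<in>?V. yv s S) + d * real (card ?G)"
      by (rule sum_grow[OF fin_sub])
    moreover have "(\<Sum>S\<in>?V. yv s S) \<le> time s - atime v" using sb v by blast
    ultimately show "(\<Sum>S\<in>?V. grow_y s d S) \<le> time s + d - atime v" by linarith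
  qed
  show ?thesis
    apply (rule invarI)
    apply (simp_all only: MvE ce gd_state.simps)
    using invarD[OF I] n6 n7 n8 c t by simp_all
qed

end

context gdl begin

lemma step_invar:
  assumes st: "gd_step N pos atime sg s s'" and I: "invar s"
  shows "invar s'"
  using st
proof cases
  case (gd_match S u v) then show ?thesis using invar_match[OF I] by blast
next
  case gd_arrive then show ?thesis using invar_arrive[OF I] by simp
next
  case (gd_merge u v S1 S2) then show ?thesis using invar_merge[OF I] by blast
next
  case (gd_grow d) then show ?thesis using invar_grow[OF I] by blast
qed

definition Bm :: "gd_state \<Rightarrow> nat" where
  "Bm s = 2*(N - arrived s) + card (active s) + (N*N - card (matching s))"

definition flag :: "gd_state \<Rightarrow> nat" where
  "flag s = (if tight_pending N pos atime sg s \<or> (arrived s < N \<and> time s = atime (arrived s)) then 0 else 1)"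

definition mu :: "gd_state \<Rightarrow> nat" where
  "mu s = 2 * Bm s + flag s"

lemma mu_less: "Bm s' < Bm s \<Longrightarrow> mu s' < mu s"
  unfolding mu_def flag_def by auto

lemma fin_active: "invar s \<Longrightarrow> finite (active s)"
proof -
  assume I: "invar s"
  have "active s \<subseteq> Pow {..<arrived s}" using invarD(3)[OF I] by blast
  then show ?thesis by (rule finite_subset) simp
qed

lemma match_sub: "invar s \<Longrightarrow> matching s \<subseteq> {..<N} \<times> {..<N}"
proof -
  assume I: "invar s"
  show ?thesis using invarD(1,11)[OF I] by fastforce
qed

lemma step_mu:
  assumes st: "gd_step N pos atime sg s s'" and I: "invar s"
  shows "mu s' < mu s"
  using st
proof cases
  case (gd_match S u v)
  have fu: "u < arrived s" "u \<notin> Mv s" and fv: "v < arrived s" using gd_match(6,7) free_Mv by auto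
  have nin: "(u,v) \<notin> matching s" using fu(2) unfolding Mv_def by force
  have finM: "finite (matching s)" using invarD(10)[OF I] .
  have c2: "card (insert (u,v) (matching s)) = card (matching s) + 1" using finM nin by simp
  have "insert (u,v) (matching s) \<subseteq> {..<N} \<times> {..<N}" using match_sub[OF I] fu fv invarD(1)[OF I] by auto
  then have "card (insert (u,v) (matching s)) \<le> card ({..<N} \<times> {..<N})" by (rule card_mono[rotated]) simp
  then have "card (insert (u,v) (matching s)) \<le> N * N" by (simp add: card_cartesian_product)
  then have "Bm s' < Bm s" using gd_match(1) c2 unfolding Bm_def by simp
  then show ?thesis by (rule mu_less)
next
  case gd_arrive
  have "{arrived s} \<notin> active s" using invarD(3)[OF I] by blast
  then have "card (insert {arrived s} (active s)) = card (active s) + 1" using fin_active[OF I] by simp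
  then have "Bm s' < Bm s" using gd_arrive(1,3) unfolding Bm_def by simp
  then show ?thesis by (rule mu_less)
next
  case (gd_merge u v S1 S2)
  note a1 = invarD(3)[OF I] and a2 = invarD(4)[OF I]
  have ne: "S1 \<noteq> S2"
  proof
    assume "S1 = S2"
    then have "u \<in> S1 \<and> v \<in> S1" using gd_merge(7,8) by simp
    then show False using gd_merge(3,5) unfolding cross_edge_def by blast
  qed
  have nin: "S1 \<union> S2 \<notin> active s - {S1, S2}"
  proof
    assume "S1 \<union> S2 \<in> active s - {S1, S2}"
    then have T: "S1 \<union> S2 \<in> active s" "S1 \<noteq> S1 \<union> S2" by (simp, blast)
    have "S1 \<inter> (S1 \<union> S2) = {}" using a2[rule_format, OF gd_merge(5) T(1) T(2)] .
    moreover have "S1 \<noteq> {}" using a1 gd_merge(5) by auto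
    ultimately show False by (simp add: Int_absorb1)
  qed
  have fA: "finite (active s)" using fin_active[OF I] .
  have "card (insert (S1 \<union> S2) (active s - {S1, S2})) = card (active s - {S1, S2}) + 1"
    using nin fA by simp
  moreover have "card (active s - {S1, S2}) = card (active s) - card {S1, S2}"
    using fA gd_merge(5,6) by (intro card_Diff_subset) auto
  moreover have "card {S1, S2} = 2" using ne by simp
  moreover have "card {S1, S2} \<le> card (active s)" using fA gd_merge(5,6) by (intro card_mono) auto
  ultimately have "Bm s' < Bm s" using gd_merge(1) unfolding Bm_def by simp
  then show ?thesis by (rule mu_less)
next
  case (gd_grow d)
  have "flag s = 1" using gd_grow(3,4) unfolding flag_def by auto
  moreover have "tight_pending N pos atime sg s' \<or> (arrived s' < N \<and> time s' = atime (arrived s'))"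
    using gd_grow(1,8) unfolding tight_pending_def by (auto simp: cross_edge_def)
  then have "flag s' = 0" unfolding flag_def by simp
  moreover have "Bm s' = Bm s" using gd_grow(1) unfolding Bm_def by simp
  ultimately show ?thesis unfolding mu_def by simp
qed

end

context gdl begin

lemma total_sum: "(\<Sum>x<N. sg x) = 0"
proof -
  from valid have v: "(\<forall>i<N. sg i = 0) \<or> ((\<forall>i<N. sg i = 1 \<or> sg i = -1) \<and> card {i. i < N \<and> sg i = 1} = m)"
    unfolding valid_instance_def by blast
  then show ?thesis
  proof
    assume "\<forall>i<N. sg i = 0" then show ?thesis by simp
  next
    assume h: "(\<forall>i<N. sg i = 1 \<or> sg i = -1) \<and> card {i. i < N \<and> sg i = 1} = m"
    let ?P = "{i. i < N \<and> sg i = 1}"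
    have sub: "?P \<subseteq> {..<N}" by auto
    have "(\<Sum>x<N. sg x) = (\<Sum>x\<in>{..<N} - ?P. sg x) + (\<Sum>x\<in>?P. sg x)"
      by (rule sum.subset_diff[OF sub]) simp
    also have "(\<Sum>x\<in>?P. sg x) = (\<Sum>x\<in>?P. 1)" by (rule sum.cong) auto
    also have "(\<Sum>x\<in>{..<N} - ?P. sg x) = (\<Sum>x\<in>{..<N} - ?P. -1)"
      by (rule sum.cong) (use h in auto)
    also have "card ({..<N} - ?P) = m" using h sub by (simp add: card_Diff_subset)
    then have "(\<Sum>x\<in>{..<N} - ?P. (-1::int)) = - int m" by simp
    also have "(\<Sum>x\<in>?P. (1::int)) = int m" using h by simp
    finally show ?thesis by simp
  qed
qed

lemma Mv_sub: "invar s \<Longrightarrow> Mv s \<subseteq> {..<arrived s}"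
proof -
  assume I: "invar s"
  show ?thesis using invarD(11)[OF I] unfolding Mv_def by fastforce
qed

lemma partner:
  assumes I: "invar s" and a: "arrived s = N" and u: "free s u"
  shows "\<exists>v. free s v \<and> v \<noteq> u \<and> sg v = - sg u"
proof -
  let ?F = "{..<N} - Mv s"
  have Fe: "free s x \<longleftrightarrow> x \<in> ?F" for x using free_Mv a by auto
  have uF: "u \<in> ?F" using Fe u by blast
  have MvN: "Mv s \<subseteq> {..<N}" using Mv_sub[OF I] a by simp
  have finMv: "finite (Mv s)" using MvN finite_subset by blast
  have cF: "card ?F = N - 2 * card (matching s)" using MvN invarD(13)[OF I] by (simp add: card_Diff_subset finMv)
  have finF: "finite ?F" by simp
  from valid have v: "(\<forall>i<N. sg i = 0) \<or> ((\<forall>i<N. sg i = 1 \<or> sg i = -1) \<and> card {i. i < N \<and> sg i = 1} = m)"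
    unfolding valid_instance_def by blast
  then show ?thesis
  proof
    assume z: "\<forall>i<N. sg i = 0"
    have "card ?F \<noteq> 0" using uF finF by auto
    moreover have "card ?F = 2 * (m - card (matching s))" using cF by (simp add: diff_mult_distrib2)
    ultimately have "card ?F \<ge> 2" by presburger
    then have "\<not> ?F \<subseteq> {u}"
    proof -
      assume c2: "card ?F \<ge> 2"
      show ?thesis
      proof
        assume "?F \<subseteq> {u}"
        then have "card ?F \<le> card {u}" by (intro card_mono) auto
        then show False using c2 by simp
      qed
    qed
    then obtain w where w: "w \<in> ?F" "w \<noteq> u" by blast
    have "sg w = - sg u" using z w uF by auto
    then show ?thesis using w Fe by blast
  next
    assume h: "(\<forall>i<N. sg i = 1 \<or> sg i = -1) \<and> card {i. i < N \<and> sg i = 1} = m"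
    have sF: "(\<Sum>x\<in>?F. sg x) = 0"
      using sum_diff[OF finite_lessThan MvN, of sg] total_sum invarD(14)[OF I] by simp
    show ?thesis
    proof (rule ccontr)
      assume nex: "\<not> ?thesis"
      have u1: "sg u = 1 \<or> sg u = -1" using h uF by auto
      have all: "\<forall>x\<in>?F. sg x = sg u"
      proof
        fix x assume x: "x \<in> ?F"
        have "sg x = 1 \<or> sg x = -1" using h x by auto
        moreover have "\<not> (x \<noteq> u \<and> sg x = - sg u)" using nex Fe x by blast
        ultimately show "sg x = sg u" using u1 by auto
      qed
      have "(\<Sum>x\<in>?F. sg x) = (\<Sum>x\<in>?F. sg u)" by (rule sum.cong) (use all in auto)
      also have "\<dots> = int (card ?F) * sg u" by simp
      finally have "int (card ?F) * sg u = 0" using sF by simp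
      moreover have "card ?F \<noteq> 0" using uF finF by auto
      ultimately show False using u1 by auto
    qed
  qed
qed

lemma no_free_perfect:
  assumes I: "invar s" and a: "arrived s = N" and nf: "\<forall>u. \<not> free s u"
  shows "perfect_matching N sg (matching s)"
  unfolding perfect_matching_def
proof (intro conjI allI impI)
  show "\<forall>(a, b)\<in>matching s. a < N \<and> b < N \<and> a \<noteq> b \<and> sg a = - sg b"
    using invarD(11)[OF I] a by simp
next
  fix u assume u: "u < N"
  then have "u \<in> Mv s" using nf free_Mv a by auto
  then obtain p where p: "p \<in> matching s" "fst p = u \<or> snd p = u" unfolding Mv_def by auto
  show "\<exists>!p. p \<in> matching s \<and> (fst p = u \<or> snd p = u)"
  proof (rule ex1I[of _ p])
    show "p \<in> matching s \<and> (fst p = u \<or> snd p = u)" using p by blast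
  next
    fix q assume q: "q \<in> matching s \<and> (fst q = u \<or> snd q = u)"
    show "q = p"
    proof (rule ccontr)
      assume "q \<noteq> p"
      then have "{fst q, snd q} \<inter> {fst p, snd p} = {}" using invarD(12)[OF I] p q by blast
      moreover have "u \<in> {fst q, snd q}" "u \<in> {fst p, snd p}" using p q by auto
      ultimately show False by blast
    qed
  qed
qed

end

context gdl begin

lemma progress:
  assumes I: "invar s" and nP: "\<not> perfect_matching N sg (matching s)"
  shows "\<exists>s'. gd_step N pos atime sg s s'"
proof (cases "match_pending sg s")
  case True
  then obtain S u v where h: "S \<in> active s" "u\<in>S" "v\<in>S" "u\<noteq>v" "free s u" "free s v" "sg u = - sg v"
    unfolding match_pending_def by blast
  show ?thesis using gd_match[OF h] by (rule exI)
next
  case nm: False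
  show ?thesis
  proof (cases "arrived s < N \<and> atime (arrived s) = time s")
    case True
    then have h: "arrived s < N" "atime (arrived s) = time s" by auto
    show ?thesis using gd_arrive[where n=N and pos=pos and atime=atime, OF nm h] by (rule exI)
  next
    case na: False
    show ?thesis
    proof (cases "tight_pending N pos atime sg s")
      case True
      then obtain u v where ce: "cross_edge sg s u v" "dualsum N (yv s) u v = cost pos atime u v"
        unfolding tight_pending_def by blast
      have "u < arrived s" "v < arrived s" using ce(1) by (auto simp: cross_edge_def)
      then obtain S1 S2 where h: "S1 \<in> active s" "u \<in> S1" "S2 \<in> active s" "v \<in> S2"
        using invarD(5)[OF I] by blast
      show ?thesis using gd_merge[OF nm ce(1) ce(2) h(1) h(3) h(2) h(4)] by (rule exI)
    next
      case nt: False
      define E where "E = {(u,v). cross_edge sg s u v}"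
      define g where "g = (\<lambda>(u,v). cost pos atime u v - dualsum N (yv s) u v)"
      define r where "r = (\<lambda>(u,v). rate N s u v)"
      have "E \<subseteq> {..<N} \<times> {..<N}" using invarD(1)[OF I] unfolding E_def cross_edge_def by auto
      then have finE: "finite E" by (rule finite_subset) simp
      have gpos: "\<forall>e\<in>E. 0 < g e"
      proof
        fix e assume "e \<in> E"
        then obtain u v where e: "e = (u,v)" "cross_edge sg s u v" unfolding E_def by blast
        have "dualsum N (yv s) u v \<le> cost pos atime u v" using invarD(9)[OF I] e by blast
        moreover have "dualsum N (yv s) u v \<noteq> cost pos atime u v" using nt e unfolding tight_pending_def by blast
        ultimately show "0 < g e" using e unfolding g_def by simp
      qed
      have rnn: "\<forall>e\<in>E. 0 \<le> r e" unfolding r_def rate_def by auto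
      have tl: "arrived s < N \<Longrightarrow> time s < atime (arrived s)"
        using invarD(2)[OF I] na by force
      have apos: "arrived s < N \<Longrightarrow> 0 < atime (arrived s) - time s" using tl by simp
      have key: "arrived s < N \<or> (\<exists>e\<in>E. 0 < r e)"
      proof (cases "arrived s < N")
        case True then show ?thesis by blast
      next
        case False
        then have aN: "arrived s = N" using invarD(1)[OF I] by simp
        have "\<exists>u. free s u"
        proof (rule ccontr)
          assume "\<not> (\<exists>u. free s u)"
          then have "perfect_matching N sg (matching s)" using no_free_perfect[OF I aN] by blast
          then show False using nP by blast
        qed
        then obtain u where u: "free s u" by blast
        then obtain v where v: "free s v" "v \<noteq> u" "sg v = - sg u" using partner[OF I aN] by blast
        have ul: "u < arrived s" and vl: "v < arrived s" using u v free_def by auto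
        have sguv: "sg u = - sg v" using v(3) by simp
        have nsame: "\<not> (\<exists>S\<in>active s. u \<in> S \<and> v \<in> S)"
        proof
          assume "\<exists>S\<in>active s. u \<in> S \<and> v \<in> S"
          then obtain S where S': "S \<in> active s" "u \<in> S" "v \<in> S" by blast
          have uv: "u \<noteq> v" using v(2) by simp
          have "match_pending sg s" unfolding match_pending_def
            by (rule bexI[OF _ S'(1)], rule bexI[OF _ S'(2)], rule bexI[OF _ S'(3)]) (use uv u v(1) sguv in simp)
          then show False using nm by blast
        qed
        have uv: "u \<noteq> v" using v(2) by simp
        have ce: "cross_edge sg s u v" unfolding cross_edge_def using ul vl uv sguv nsame by simp
        obtain S where S: "S \<in> active s" "u \<in> S" using invarD(5)[OF I] ul by blast
        have vS: "v \<notin> S" using nsame S by blast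
        have "S \<subseteq> {..<arrived s}" using invarD(3)[OF I] S(1) by simp
        then have SN: "S \<subseteq> {..<N}" using aN by simp
        have gS: "growing s S" using S u unfolding growing_def by blast
        let ?G = "{S\<in>{S. S \<subseteq> {..<N} \<and> (u \<in> S) \<noteq> (v \<in> S)}. S \<in> active s \<and> growing s S}"
        have "S \<in> ?G" using S(1) S(2) vS SN gS by simp
        moreover have "finite ?G" using fin_sub[of N "\<lambda>S. (u \<in> S) \<noteq> (v \<in> S)"] by simp
        ultimately have "card ?G > 0" using card_gt_0_iff by blast
        then have "0 < r (u,v)" unfolding r_def rate_def by simp
        moreover have "(u,v) \<in> E" using ce unfolding E_def by simp
        ultimately show ?thesis by blast
      qed
      obtain d where d: "0 < d" "arrived s < N \<longrightarrow> d \<le> atime (arrived s) - time s"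
          "\<forall>e\<in>E. d * r e \<le> g e"
          "(arrived s < N \<and> d = atime (arrived s) - time s) \<or> (\<exists>e\<in>E. d * r e = g e)"
        using exists_d[OF finE gpos rnn key apos] by blast
      have c1: "\<forall>u v. cross_edge sg s u v \<longrightarrow> dualsum N (grow_y s d) u v \<le> cost pos atime u v"
      proof (intro allI impI)
        fix u v assume "cross_edge sg s u v"
        then have "(u,v) \<in> E" unfolding E_def by simp
        then have "d * rate N s u v \<le> cost pos atime u v - dualsum N (yv s) u v"
          using d(3) unfolding r_def g_def by fastforce
        then show "dualsum N (grow_y s d) u v \<le> cost pos atime u v" by (simp add: dualsum_grow)
      qed
      have c2: "(arrived s < N \<and> time s + d = atime (arrived s)) \<or>
         (\<exists>u v. cross_edge sg s u v \<and> dualsum N (grow_y s d) u v = cost pos atime u v)"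
      proof (cases "arrived s < N \<and> d = atime (arrived s) - time s")
        case True then show ?thesis by auto
      next
        case False
        then obtain e where e: "e \<in> E" "d * r e = g e" using d(4) by blast
        then obtain u v where uv: "e = (u,v)" "cross_edge sg s u v" unfolding E_def by blast
        then have "dualsum N (grow_y s d) u v = cost pos atime u v"
          using e unfolding r_def g_def by (simp add: dualsum_grow)
        then show ?thesis using uv by blast
      qed
      have "gd_step N pos atime sg s (s\<lparr>time := time s + d, yv := grow_y s d\<rparr>)"
      proof (rule gd_grow)
        show "\<not> match_pending sg s" by fact
        show "\<not> tight_pending N pos atime sg s" by fact
        show "arrived s < N \<longrightarrow> time s < atime (arrived s)" using tl by blast
        show "0 < d" by fact
        show "arrived s < N \<longrightarrow> time s + d \<le> atime (arrived s)" using d(2) by auto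
        show "\<forall>u v. cross_edge sg s u v \<longrightarrow> dualsum N (grow_y s d) u v \<le> cost pos atime u v" by fact
        show "(arrived s < N \<and> time s + d = atime (arrived s)) \<or>
         (\<exists>u v. cross_edge sg s u v \<and> dualsum N (grow_y s d) u v = cost pos atime u v)" by fact
      qed
      then show ?thesis by blast
    qed
  qed
qed

lemma inev: "invar s \<Longrightarrow> inevitably (gd_step N pos atime sg) (\<lambda>s. perfect_matching N sg (matching s)) s"
proof (induction "mu s" arbitrary: s rule: less_induct)
  case less
  show ?case
  proof (cases "perfect_matching N sg (matching s)")
    case True then show ?thesis by (rule inevitably.now)
  next
    case False
    show ?thesis
    proof (rule inevitably.later)
      show "\<exists>s'. gd_step N pos atime sg s s'" using progress less.prems False by blast
      show "\<forall>s'. gd_step N pos atime sg s s' \<longrightarrow> inevitably (gd_step N pos atime sg) (\<lambda>s. perfect_matching N sg (matching s)) s'"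
        using less step_mu step_invar by blast
    qed
  qed
qed

end

theorem lemma4:
  fixes m :: nat and pos :: "nat \<Rightarrow> 'a::metric_space"
    and atime :: "nat \<Rightarrow> real" and sg :: "nat \<Rightarrow> int"
  assumes "valid_instance m atime sg"
  shows "inevitably (gd_step (2*m) pos atime sg)
           (\<lambda>s. perfect_matching (2*m) sg (matching s)) gd_init"
proof -
  interpret gdl m pos atime sg by unfold_locales (rule assms)
  show ?thesis using inev invar_init by blast
qed


end
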